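(* Let $X$ and $Y$ be metric spaces and let $A(X)\subseteq C(X)$ and $A(Y)\subseteq C(Y)$ be adequate subspaces. If $h:\mathcal{A}X\to\mathcal{A}Y$ is a homeomorphism and $x_0\in X$, then there is a sequence $(y_n)$ in $Y$ that converges to $h(x_0)$ in $\mathcal{A}Y$.
   Context: All functions are real-valued. $A(X)\subseteq C(X)$ separates points from closed sets if for every $x\in X$ and closed $F\not\ni x$ there is $f\in A(X)$ with $f(x)=1$, $f=0$ on $F$. $A(X)$ is adequate if (a) it separates points from closed sets and contains the constants; (b) there is a continuous nondecreasing $g:\mathbb{R}\to\mathbb{R}$ with $g(t)=0$ for $t\le0$, $g(t)=1$ for $t\ge1$, and $g\circ f\in A(X)$ for all $f\in A(X)$; (c) every $f\in A(X)$ is a difference of two nonnegative elements of $A(X)$. The $A(X)$-compactification $\mathcal{A}X$ is the closure of $i(X)$ in $[-\infty,\infty]^{A(X)}$ (product of order topologies), where $i(x)(\varphi)=\varphi(x)$ is a homeomorphic embedding; $X$ is identified with $i(X)\subseteq\mathcal{A}X$. $\mathcal{A}Y$ is defined analogously from $A(Y)$. *)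

theory Defs
  imports "HOL-Analysis.Analysis" "HOL-Library.Extended_Real"
begin

text \<open>A metric space X is modelled as a type of class metric_space (X = UNIV).
  C(X) is the set of real-valued continuous functions on X.\<close>

definition Cfun :: "('a::metric_space \<Rightarrow> real) set" where
  "Cfun = {f. continuous_on UNIV f}"

definition lin_subspace :: "('a \<Rightarrow> real) set \<Rightarrow> bool" where
  "lin_subspace A \<longleftrightarrow> (\<lambda>_. 0) \<in> A \<and> (\<forall>f\<in>A. \<forall>g\<in>A. (\<lambda>x. f x + g x) \<in> A)
     \<and> (\<forall>c. \<forall>f\<in>A. (\<lambda>x. c * f x) \<in> A)"

definition separates_points_closed :: "('a::metric_space \<Rightarrow> real) set \<Rightarrow> bool" where
  "separates_points_closed A \<longleftrightarrow>
     (\<forall>x F. closed F \<and> x \<notin> F \<longrightarrow> (\<exists>f\<in>A. f x = 1 \<and> (\<forall>y\<in>F. f y = 0)))"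

definition adequate :: "('a::metric_space \<Rightarrow> real) set \<Rightarrow> bool" where
  "adequate A \<longleftrightarrow>
     separates_points_closed A \<and> (\<forall>c. (\<lambda>_. c) \<in> A) \<and>
     (\<exists>g::real \<Rightarrow> real. continuous_on UNIV g \<and> mono g \<and>
        (\<forall>t\<le>0. g t = 0) \<and> (\<forall>t\<ge>1. g t = 1) \<and> (\<forall>f\<in>A. g \<circ> f \<in> A)) \<and>
     (\<forall>f\<in>A. \<exists>u\<in>A. \<exists>v\<in>A. (\<forall>x. 0 \<le> u x) \<and> (\<forall>x. 0 \<le> v x) \<and> f = (\<lambda>x. u x - v x))"

text \<open>The product space [-\<infinity>,\<infinity>]^A, each factor with its order topology
  (the standard topology on ereal is its order topology).\<close>
definition cube :: "('a \<Rightarrow> real) set \<Rightarrow> (('a \<Rightarrow> real) \<Rightarrow> ereal) topology" where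
  "cube A = product_topology (\<lambda>_. (euclidean :: ereal topology)) A"

definition evalmap :: "('a \<Rightarrow> real) set \<Rightarrow> 'a \<Rightarrow> (('a \<Rightarrow> real) \<Rightarrow> ereal)" where
  "evalmap A x = restrict (\<lambda>\<phi>. ereal (\<phi> x)) A"

definition cpt_set :: "('a \<Rightarrow> real) set \<Rightarrow> (('a \<Rightarrow> real) \<Rightarrow> ereal) set" where
  "cpt_set A = (cube A) closure_of (evalmap A ` UNIV)"

definition cpt :: "('a \<Rightarrow> real) set \<Rightarrow> (('a \<Rightarrow> real) \<Rightarrow> ereal) topology" where
  "cpt A = subtopology (cube A) (cpt_set A)"

end

theory Submission
  imports Defs
begin

lemma topspace_cube: "topspace (cube A) = PiE A (\<lambda>_. UNIV)"
  unfolding cube_def by (simp add: topspace_product_topology)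

lemma cpt_set_sub: "cpt_set A \<subseteq> topspace (cube A)"
  unfolding cpt_set_def by (rule closure_of_subset_topspace)

lemma topspace_cpt: "topspace (cpt A) = cpt_set A"
  unfolding cpt_def using cpt_set_sub by auto

lemma evalmap_cube: "evalmap A x \<in> topspace (cube A)"
  unfolding topspace_cube evalmap_def by auto

lemma evalmap_cpt: "evalmap A x \<in> cpt_set A"
proof -
  have "evalmap A ` UNIV \<subseteq> topspace (cube A)" using evalmap_cube by auto
  then show ?thesis unfolding cpt_set_def using closure_of_subset by blast
qed

lemma proj_cube: "\<phi> \<in> A \<Longrightarrow> continuous_map (cube A) euclidean (\<lambda>p. p \<phi>)"
  unfolding cube_def by (rule continuous_map_product_projection)

lemma proj_cpt: "\<phi> \<in> A \<Longrightarrow> continuous_map (cpt A) euclidean (\<lambda>p. p \<phi>)"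
  unfolding cpt_def by (intro continuous_map_from_subtopology proj_cube)

lemma compact_cpt: "compact_space (cpt A)"
proof -
  have ce: "compact_space (euclidean :: ereal topology)"
    by (simp add: compact_space_def compact_UNIV)
  have cc: "compact_space (cube A)"
    unfolding cube_def by (rule iffD2[OF compact_space_product_topology]) (simp add: ce)
  have cl: "closedin (cube A) (cpt_set A)"
    unfolding cpt_set_def by (rule closedin_closure_of)
  show ?thesis unfolding cpt_def
    by (rule compact_space_subtopology[OF closedin_compact_space[OF cc cl]])
qed

lemma dense_cpt:
  assumes "openin (cpt A) U" "U \<noteq> {}"
  shows "\<exists>y. evalmap A y \<in> U"
proof -
  obtain T where T: "openin (cube A) T" "U = T \<inter> cpt_set A"
    using assms(1) unfolding cpt_def openin_subtopology by auto
  obtain p where p: "p \<in> U" using assms(2) by auto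
  then have pT: "p \<in> T" and pc: "p \<in> cube A closure_of (evalmap A ` UNIV)"
    using T unfolding cpt_set_def by auto
  have "\<exists>y. y \<in> evalmap A ` UNIV \<and> y \<in> T"
    using pc pT T(1) unfolding in_closure_of by auto
  then obtain z where "evalmap A z \<in> T" by auto
  then show ?thesis using T evalmap_cpt[of A z] by auto
qed

lemma nest_limit:
  assumes "compact_space X" "\<And>n. closedin X (K n)" "decseq K" "(\<Inter>n. K n) \<subseteq> {a}"
    "a \<in> topspace X" "\<And>n. p n \<in> K n"
  shows "limitin X p a sequentially"
  unfolding limitin_sequentially
proof (intro conjI allI impI)
  show "a \<in> topspace X" by fact
  fix W assume W: "openin X W \<and> a \<in> W"
  have "\<exists>N. K N - W = {}"
  proof (rule ccontr)
    assume "\<not> ?thesis"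
    then have ne: "\<And>n. K n - W \<noteq> {}" by blast
    have "(\<Inter>n. K n - W) \<noteq> {}"
    proof (rule compact_space_imp_nest[OF assms(1)])
      show "closedin X (K n - W)" for n using assms(2) W by (simp add: closedin_diff)
      show "K n - W \<noteq> {}" for n by (rule ne)
      show "decseq (\<lambda>n. K n - W)" using assms(3) unfolding decseq_def by blast
    qed
    then show False using assms(4) W by blast
  qed
  then obtain N where N: "K N - W = {}" by blast
  show "\<exists>N. \<forall>n\<ge>N. p n \<in> W"
  proof (intro exI allI impI)
    fix n assume "N \<le> n"
    then have "K n \<subseteq> K N" using assms(3) unfolding decseq_def by blast
    then show "p n \<in> W" using assms(6)[of n] N by blast
  qed
qed

lemma key_nest:
  fixes A :: "('a::metric_space \<Rightarrow> real) set" and x0 :: 'a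
  assumes AC: "A \<subseteq> Cfun" and sep: "separates_points_closed A"
  shows "\<exists>U K. (\<forall>n. openin (cpt A) (U n)) \<and> (\<forall>n. evalmap A x0 \<in> U n) \<and>
     (\<forall>n. closedin (cpt A) (K n)) \<and> decseq K \<and> (\<forall>n. U n \<subseteq> K n) \<and> (\<Inter>n. K n) \<subseteq> {evalmap A x0}"
proof -
  have ex: "\<forall>m::nat. \<exists>f. f \<in> A \<and> f x0 = 1 \<and> (\<forall>y\<in>- ball x0 (1 / Suc m). f y = 0)"
  proof
    fix m :: nat
    have "closed (- ball x0 (1 / Suc m))" by auto
    moreover have "x0 \<notin> - ball x0 (1 / Suc m)" by auto
    ultimately show "\<exists>f. f \<in> A \<and> f x0 = 1 \<and> (\<forall>y\<in>- ball x0 (1 / Suc m). f y = 0)"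
      using sep unfolding separates_points_closed_def by blast
  qed
  then obtain f where f: "\<forall>m. f m \<in> A \<and> f m x0 = 1 \<and> (\<forall>y\<in>- ball x0 (1 / Suc m). f m y = 0)"
    using choice[OF ex] by blast
  have fA: "\<And>m. f m \<in> A" and f1: "\<And>m. f m x0 = 1"
    and f0: "\<And>m y. y \<notin> ball x0 (1 / Suc m) \<Longrightarrow> f m y = 0"
    using f by auto
  define V where "V m = {p \<in> topspace (cpt A). p (f m) \<in> {ereal (1/2)<..}}" for m
  define C where "C m = {p \<in> topspace (cpt A). p (f m) \<in> {ereal (1/2)..}}" for m
  define U where "U n = (\<Inter>m\<in>{..n}. V m)" for n
  define K where "K n = (\<Inter>m\<in>{..n}. C m)" for n
  have oV: "openin (cpt A) (V m)" for m
    unfolding V_def by (rule openin_continuous_map_preimage[OF proj_cpt[OF fA]]) auto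
  have cC: "closedin (cpt A) (C m)" for m
    unfolding C_def by (rule closedin_continuous_map_preimage[OF proj_cpt[OF fA]]) auto
  have "openin (cpt A) (U n)" for n
    unfolding U_def by (rule openin_INT2) (auto intro: oV)
  moreover have "closedin (cpt A) (K n)" for n
    unfolding K_def by (rule closedin_INT) (auto intro: cC)
  moreover have "evalmap A x0 \<in> U n" for n
    using evalmap_cpt[of A x0] fA f1 unfolding U_def V_def topspace_cpt evalmap_def
    by (auto simp: one_ereal_def)
  moreover have "decseq K"
    unfolding decseq_def K_def by auto
  moreover have "U n \<subseteq> K n" for n
    unfolding U_def K_def V_def C_def by (auto intro: less_imp_le)
  moreover have "(\<Inter>n. K n) \<subseteq> {evalmap A x0}"
  proof
    fix p assume p: "p \<in> (\<Inter>n. K n)"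
    then have pc: "p \<in> cpt_set A" and pf: "\<And>m. p (f m) \<ge> ereal (1/2)"
      unfolding K_def C_def topspace_cpt by auto
    have pE: "p \<in> PiE A (\<lambda>_. UNIV)" using pc cpt_set_sub topspace_cube by blast
    have "p \<phi> = ereal (\<phi> x0)" if \<phi>A: "\<phi> \<in> A" for \<phi>
    proof (rule ccontr)
      assume ne: "p \<phi> \<noteq> ereal (\<phi> x0)"
      define c where "c = \<phi> x0"
      obtain e where e: "e > 0" "p \<phi> \<notin> {ereal (c - e)..ereal (c + e)}"
      proof (cases "p \<phi>")
        case (real r)
        then have "r \<noteq> c" using ne c_def by auto
        then show ?thesis using real
          by (intro that[of "\<bar>r - c\<bar> / 2"]) (auto simp: abs_if field_simps split: if_split_asm)
      next
        case PInf then show ?thesis by (intro that[of 1]) auto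
      next
        case MInf then show ?thesis by (intro that[of 1]) auto
      qed
      have "continuous_on UNIV \<phi>" using AC \<phi>A unfolding Cfun_def by auto
      then obtain d where d: "d > 0" "\<And>x. dist x x0 < d \<Longrightarrow> dist (\<phi> x) (\<phi> x0) < e"
        using e(1) unfolding continuous_on_iff by (metis UNIV_I)
      obtain m :: nat where m: "1 / Suc m < d"
        using d(1) by (metis nat_approx_posE)
      define N where "N = {q \<in> topspace (cube A). q \<phi> \<in> - {ereal (c - e)..ereal (c + e)}}
                        \<inter> {q \<in> topspace (cube A). q (f m) \<in> {ereal (1/4)<..}}"
      have "openin (cube A) N"
        unfolding N_def
        by (intro openin_Int openin_continuous_map_preimage[OF proj_cube] fA \<phi>A) auto
      moreover have "p \<in> N"
      proof -
        have "ereal (1/4) < ereal (1/2)" by simp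
        also have "\<dots> \<le> p (f m)" by (rule pf)
        finally show ?thesis unfolding N_def using pc cpt_set_sub e(2) by auto
      qed
      ultimately obtain y where "y \<in> evalmap A ` UNIV" "y \<in> N"
        using pc unfolding cpt_set_def in_closure_of by blast
      then obtain x where xN: "evalmap A x \<in> N" by auto
      then have "ereal (f m x) > ereal (1/4)" and xp: "ereal (\<phi> x) \<notin> {ereal (c - e)..ereal (c + e)}"
        unfolding N_def evalmap_def using fA \<phi>A by auto
      then have "f m x \<noteq> 0" by auto
      then have "x \<in> ball x0 (1 / Suc m)" using f0 by blast
      then have "dist x x0 < d" using m by (simp add: dist_commute)
      then have "dist (\<phi> x) c < e" using d c_def by auto
      then have "\<phi> x \<in> {c - e..c + e}" by (auto simp: dist_real_def)
      then show False using xp by auto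
    qed
    then have "p = evalmap A x0"
      using pE unfolding evalmap_def by (auto simp: PiE_def extensional_def)
    then show "p \<in> {evalmap A x0}" by simp
  qed
  ultimately show ?thesis by blast
qed

theorem proposition4p2:
  fixes AX :: "('a::metric_space \<Rightarrow> real) set"
    and AY :: "('b::metric_space \<Rightarrow> real) set"
    and h :: "(('a \<Rightarrow> real) \<Rightarrow> ereal) \<Rightarrow> (('b \<Rightarrow> real) \<Rightarrow> ereal)"
    and x0 :: 'a
  assumes "AX \<subseteq> Cfun" "lin_subspace AX" "adequate AX"
    and "AY \<subseteq> Cfun" "lin_subspace AY" "adequate AY"
    and "homeomorphic_map (cpt AX) (cpt AY) h"
  shows "\<exists>y :: nat \<Rightarrow> 'b. limitin (cpt AY) (\<lambda>n. evalmap AY (y n)) (h (evalmap AX x0)) sequentially"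
proof -
  have sep: "separates_points_closed AX" using assms(3) unfolding adequate_def by auto
  obtain U K where oU: "\<And>n. openin (cpt AX) (U n)" and xU: "\<And>n. evalmap AX x0 \<in> U n"
    and cK: "\<And>n. closedin (cpt AX) (K n)" and dK: "decseq K" and UK: "\<And>n. U n \<subseteq> K n"
    and IK: "(\<Inter>n. K n) \<subseteq> {evalmap AX x0}"
    using key_nest[OF assms(1) sep, of x0] by blast
  obtain g where hg: "homeomorphic_maps (cpt AX) (cpt AY) h g"
    using assms(7) by (auto simp: homeomorphic_map_maps)
  then have hc: "continuous_map (cpt AX) (cpt AY) h" and gc: "continuous_map (cpt AY) (cpt AX) g"
    and gh: "\<And>x. x \<in> topspace (cpt AX) \<Longrightarrow> g (h x) = x"
    and hgi: "\<And>y. y \<in> topspace (cpt AY) \<Longrightarrow> h (g y) = y"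
    by (auto simp: homeomorphic_maps_def)
  have "\<exists>y. evalmap AY y \<in> h ` U n" for n
  proof (rule dense_cpt)
    show "openin (cpt AY) (h ` U n)"
      using homeomorphic_map_openness[OF assms(7) openin_subset[OF oU]] oU by blast
    show "h ` U n \<noteq> {}" using xU by blast
  qed
  then obtain y where y: "\<And>n. evalmap AY (y n) \<in> h ` U n" by metis
  have gyK: "g (evalmap AY (y n)) \<in> K n" for n
  proof -
    obtain p where "p \<in> U n" "evalmap AY (y n) = h p" using y[of n] by blast
    moreover have "p \<in> topspace (cpt AX)" using \<open>p \<in> U n\<close> openin_subset[OF oU] by blast
    ultimately show ?thesis using gh UK by auto
  qed
  have "limitin (cpt AX) (\<lambda>n. g (evalmap AY (y n))) (evalmap AX x0) sequentially"
    by (rule nest_limit[OF compact_cpt cK dK IK _ gyK])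
       (use xU openin_subset[OF oU] in blast)
  from continuous_map_limit[OF hc this]
  have "limitin (cpt AY) (h \<circ> (\<lambda>n. g (evalmap AY (y n)))) (h (evalmap AX x0)) sequentially" .
  moreover have "(h \<circ> (\<lambda>n. g (evalmap AY (y n)))) = (\<lambda>n. evalmap AY (y n))"
    using hgi evalmap_cpt[of AY] by (auto simp: topspace_cpt)
  ultimately show ?thesis by auto
qed

end
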